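(* Let $G$ be a finitely generated group of exponential growth with finite generating set $A$, $S=A\cup A^{-1}$, and let $\psi:L\to G$ be an arbitrary bijection from a language $L\subseteq S^*$ onto $G$. Then there is a constant $\lambda_1>0$ such that, with $B_n=\{g\in G: d_A(g)\le n\}$ and $Q'_n=\{g\in B_n: \lambda_1 d_A(g)\le|\psi^{-1}(g)|\}$, one has $\lim_{n\to\infty}\#Q'_n/\#B_n=1$, and for every $g\in Q'_n$, writing $w=\psi^{-1}(g)$, $d_A(\pi(w),\psi(w))\le(1+1/\lambda_1)|w|$.
   Context: $\pi:S^*\to G$ is the evaluation map and $d_A$ the word metric of $\Gamma(G,A)$, $d_A(g)=d_A(e,g)$. Exponential growth means there is $\lambda>1$ with $\#B_n\ge\lambda^n$ for all large $n$. *)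

theory Defs
  imports "HOL-Analysis.Analysis" "HOL-Algebra.Algebra"
begin

definition sym_gens :: "('a, 'b) monoid_scheme \<Rightarrow> 'a set \<Rightarrow> 'a set" where
  "sym_gens G A = A \<union> (\<lambda>a. inv\<^bsub>G\<^esub> a) ` A"

definition eval_word :: "('a, 'b) monoid_scheme \<Rightarrow> 'a list \<Rightarrow> 'a" where
  "eval_word G w = foldr (\<lambda>x y. x \<otimes>\<^bsub>G\<^esub> y) w \<one>\<^bsub>G\<^esub>"

definition word_length :: "('a, 'b) monoid_scheme \<Rightarrow> 'a set \<Rightarrow> 'a \<Rightarrow> nat" where
  "word_length G A g = (LEAST n. \<exists>w \<in> lists (sym_gens G A). length w = n \<and> eval_word G w = g)"

definition word_dist :: "('a, 'b) monoid_scheme \<Rightarrow> 'a set \<Rightarrow> 'a \<Rightarrow> 'a \<Rightarrow> nat" where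
  "word_dist G A g h = word_length G A (inv\<^bsub>G\<^esub> g \<otimes>\<^bsub>G\<^esub> h)"

definition word_ball :: "('a, 'b) monoid_scheme \<Rightarrow> 'a set \<Rightarrow> nat \<Rightarrow> 'a set" where
  "word_ball G A n = {g \<in> carrier G. word_length G A g \<le> n}"

definition exponential_growth :: "('a, 'b) monoid_scheme \<Rightarrow> 'a set \<Rightarrow> bool" where
  "exponential_growth G A \<longleftrightarrow>
     (\<exists>c::real. c > 1 \<and> (\<forall>\<^sub>F n in sequentially. real (card (word_ball G A n)) \<ge> c ^ n))"

end

theory Submission
  imports Defs
begin

lemma sum_pow_le: "(\<Sum>i\<le>m. (s::nat)^i) \<le> (s+1)^m"
proof (induction m)
  case 0 then show ?case by simp
next
  case (Suc m)
  have "(\<Sum>i\<le>Suc m. s^i) = (\<Sum>i\<le>m. s^i) + s^Suc m" by simp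
  also have "\<dots> \<le> (s+1)^m + s * s^m" using Suc by simp
  also have "s * s^m \<le> s * (s+1)^m" by (simp add: power_mono)
  hence "(s+1)^m + s * s^m \<le> (s+1)^Suc m" by simp
  finally show ?case .
qed

context group
begin

lemma eval_closed: "set w \<subseteq> carrier G \<Longrightarrow> eval_word G w \<in> carrier G"
  by (induction w) (auto simp: eval_word_def)

lemma eval_append: "set u \<subseteq> carrier G \<Longrightarrow> set v \<subseteq> carrier G \<Longrightarrow>
   eval_word G (u @ v) = eval_word G u \<otimes> eval_word G v"
proof (induction u)
  case Nil then show ?case using eval_closed[of v] by (simp add: eval_word_def)
next
  case (Cons a u)
  have "eval_word G ((a # u) @ v) = a \<otimes> eval_word G (u @ v)" by (simp add: eval_word_def)
  also have "\<dots> = a \<otimes> (eval_word G u \<otimes> eval_word G v)" using Cons by simp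
  also have "\<dots> = (a \<otimes> eval_word G u) \<otimes> eval_word G v"
    using Cons.prems eval_closed[of u] eval_closed[of v] by (simp add: m_assoc)
  finally show ?case by (simp add: eval_word_def)
qed

lemma sym_sub: "A \<subseteq> carrier G \<Longrightarrow> sym_gens G A \<subseteq> carrier G"
  unfolding sym_gens_def by auto

lemma gen_word: assumes "A \<subseteq> carrier G" "x \<in> generate G A"
  shows "\<exists>w \<in> lists (sym_gens G A). eval_word G w = x"
  using assms(2)
proof (induction rule: generate.induct)
  case one
  then show ?case by (intro bexI[of _ "[]"]) (auto simp: eval_word_def)
next
  case (incl h)
  then show ?case using assms(1)
    by (intro bexI[of _ "[h]"]) (auto simp: eval_word_def sym_gens_def)
next
  case (inv h)
  then show ?case using assms(1)
    by (intro bexI[of _ "[inv h]"]) (auto simp: eval_word_def sym_gens_def)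
next
  case (eng h1 h2)
  then obtain u v where u: "u \<in> lists (sym_gens G A)" "eval_word G u = h1"
    and v: "v \<in> lists (sym_gens G A)" "eval_word G v = h2" by blast
  have "set u \<subseteq> carrier G" "set v \<subseteq> carrier G" using u v sym_sub[OF assms(1)] by auto
  then show ?case using u v by (intro bexI[of _ "u @ v"]) (auto simp: eval_append)
qed

lemma inv_word: assumes "A \<subseteq> carrier G"
  shows "w \<in> lists (sym_gens G A) \<Longrightarrow> \<exists>v \<in> lists (sym_gens G A). length v = length w \<and> eval_word G v = inv (eval_word G w)"
proof (induction w)
  case Nil then show ?case by (intro bexI[of _ "[]"]) (auto simp: eval_word_def)
next
  case (Cons a w)
  then obtain v where v: "v \<in> lists (sym_gens G A)" "length v = length w"
      "eval_word G v = inv (eval_word G w)" by auto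
  have aS: "a \<in> sym_gens G A" using Cons by auto
  have ac: "a \<in> carrier G" using aS sym_sub[OF assms(1)] by auto
  have ia: "inv a \<in> sym_gens G A" using aS assms(1)
    unfolding sym_gens_def by (auto simp: subset_iff)
  have wc: "set w \<subseteq> carrier G" "set v \<subseteq> carrier G"
    using Cons.prems v sym_sub[OF assms(1)] by auto
  have "eval_word G (v @ [inv a]) = eval_word G v \<otimes> eval_word G [inv a]"
    using wc ac by (intro eval_append) auto
  also have "\<dots> = inv (eval_word G w) \<otimes> inv a" using v ac by (simp add: eval_word_def)
  also have "\<dots> = inv (a \<otimes> eval_word G w)" using ac eval_closed[OF wc(1)] by (simp add: inv_mult_group)
  finally show ?case using v ia by (intro bexI[of _ "v @ [inv a]"]) (auto simp: eval_word_def)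
qed

lemma wl_le: "w \<in> lists (sym_gens G A) \<Longrightarrow> word_length G A (eval_word G w) \<le> length w"
  unfolding word_length_def by (rule Least_le) auto

lemma wl_ex: assumes "\<exists>w \<in> lists (sym_gens G A). eval_word G w = g"
  shows "\<exists>w \<in> lists (sym_gens G A). length w = word_length G A g \<and> eval_word G w = g"
proof -
  have "\<exists>n. \<exists>w \<in> lists (sym_gens G A). length w = n \<and> eval_word G w = g" using assms by auto
  from LeastI_ex[OF this] show ?thesis unfolding word_length_def .
qed

lemma wl_mult: assumes "A \<subseteq> carrier G" "generate G A = carrier G" "x \<in> carrier G" "y \<in> carrier G"
  shows "word_length G A (x \<otimes> y) \<le> word_length G A x + word_length G A y"
proof -
  obtain u where u: "u \<in> lists (sym_gens G A)" "length u = word_length G A x" "eval_word G u = x"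
    using wl_ex gen_word[OF assms(1)] assms by metis
  obtain v where v: "v \<in> lists (sym_gens G A)" "length v = word_length G A y" "eval_word G v = y"
    using wl_ex gen_word[OF assms(1)] assms by metis
  have "set u \<subseteq> carrier G" "set v \<subseteq> carrier G" using u v sym_sub[OF assms(1)] by auto
  hence "eval_word G (u @ v) = x \<otimes> y" using u v eval_append by auto
  moreover have "u @ v \<in> lists (sym_gens G A)" using u v by auto
  ultimately have "word_length G A (x \<otimes> y) \<le> length (u @ v)" using wl_le by metis
  then show ?thesis using u v by simp
qed

end

theorem mainTheorem14:
  fixes G :: "('a, 'b) monoid_scheme" and A :: "'a set"
    and L :: "'a list set" and \<psi> :: "'a list \<Rightarrow> 'a"
  assumes "group G"
    and "finite A" and "A \<subseteq> carrier G" and "generate G A = carrier G"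
    and "exponential_growth G A"
    and "L \<subseteq> lists (sym_gens G A)"
    and "bij_betw \<psi> L (carrier G)"
  shows "\<exists>lam1::real. lam1 > 0 \<and>
     (let Q' = (\<lambda>n. {g \<in> word_ball G A n.
                 lam1 * real (word_length G A g) \<le> real (length (the_inv_into L \<psi> g))})
      in ((\<lambda>n. real (card (Q' n)) / real (card (word_ball G A n))) \<longlonglongrightarrow> 1) \<and>
         (\<forall>n. \<forall>g \<in> Q' n. let w = the_inv_into L \<psi> g in
             real (word_dist G A (eval_word G w) (\<psi> w)) \<le> (1 + 1 / lam1) * real (length w)))"
proof -
  interpret group G by fact
  define S where "S = sym_gens G A"
  have finS: "finite S" using assms(2) unfolding S_def sym_gens_def by auto
  obtain c :: real where c1: "c > 1" and ev: "\<forall>\<^sub>F n in sequentially. real (card (word_ball G A n)) \<ge> c ^ n"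
    using assms(5) unfolding exponential_growth_def by auto
  define K :: real where "K = real (card S) + 2"
  have K2: "K \<ge> 2" unfolding K_def by simp
  define lam where "lam = ln c / (2 * ln K)"
  have lnK: "ln K > 0" using K2 by simp
  have lnc: "ln c > 0" using c1 by simp
  have lam0: "lam > 0" unfolding lam_def using lnK lnc by simp
  define r where "r = K powr lam"
  have r_eq: "r = exp (ln c / 2)" unfolding r_def powr_def lam_def using K2 lnK by simp
  have r0: "r > 0" unfolding r_def using K2 by simp
  have rc: "r < c" unfolding r_eq using lnc c1 by (metis exp_less_mono exp_ln half_gt_zero less_add_same_cancel1 field_sum_of_halves less_le_trans order_refl zero_less_one c1 less_trans)
  define Q where "Q = (\<lambda>n. {g \<in> word_ball G A n.
                 lam * real (word_length G A g) \<le> real (length (the_inv_into L \<psi> g))})"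
  have inj: "inj_on \<psi> L" using assms(7) by (simp add: bij_betw_def)
  have img: "\<psi> ` L = carrier G" using assms(7) by (simp add: bij_betw_def)
  have invL: "the_inv_into L \<psi> g \<in> L" if "g \<in> carrier G" for g
    using the_inv_into_into[OF inj, of g L] that img by auto
  have psiinv: "\<psi> (the_inv_into L \<psi> g) = g" if "g \<in> carrier G" for g
    using f_the_inv_into_f[OF inj, of g] that img by auto
  have part2: "\<forall>n. \<forall>g \<in> Q n. let w = the_inv_into L \<psi> g in
             real (word_dist G A (eval_word G w) (\<psi> w)) \<le> (1 + 1 / lam) * real (length w)"
  proof (intro allI ballI)
    fix n g assume gQ: "g \<in> Q n"
    hence gc: "g \<in> carrier G" and lg: "lam * real (word_length G A g) \<le> real (length (the_inv_into L \<psi> g))"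
      unfolding Q_def word_ball_def by auto
    define w where "w = the_inv_into L \<psi> g"
    have wL: "w \<in> L" using invL[OF gc] w_def by simp
    hence wS: "w \<in> lists S" using assms(6) S_def by auto
    have pw: "\<psi> w = g" using psiinv[OF gc] w_def by simp
    have wc: "set w \<subseteq> carrier G" using wS sym_sub[OF assms(3)] S_def by auto
    have ec: "eval_word G w \<in> carrier G" using eval_closed[OF wc] .
    obtain v where v: "v \<in> lists S" "length v = length w" "eval_word G v = inv\<^bsub>G\<^esub> (eval_word G w)"
      using inv_word[OF assms(3)] wS S_def by metis
    have "word_dist G A (eval_word G w) (\<psi> w) = word_length G A (inv\<^bsub>G\<^esub> (eval_word G w) \<otimes>\<^bsub>G\<^esub> g)"
      unfolding word_dist_def pw by simp
    also have "\<dots> \<le> word_length G A (inv\<^bsub>G\<^esub> (eval_word G w)) + word_length G A g"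
      using wl_mult[OF assms(3,4)] ec gc by simp
    also have "word_length G A (inv\<^bsub>G\<^esub> (eval_word G w)) \<le> length w"
      using wl_le[of v A] v S_def by simp
    finally have d: "real (word_dist G A (eval_word G w) (\<psi> w)) \<le> real (length w) + real (word_length G A g)"
      by linarith
    have "real (word_length G A g) \<le> real (length w) / lam"
      using lg lam0 w_def by (simp add: field_simps mult.commute)
    hence "real (word_dist G A (eval_word G w) (\<psi> w)) \<le> real (length w) + real (length w) / lam"
      using d by linarith
    also have "\<dots> = (1 + 1/lam) * real (length w)" by (simp add: field_simps)
    finally show "let w = the_inv_into L \<psi> g in
             real (word_dist G A (eval_word G w) (\<psi> w)) \<le> (1 + 1 / lam) * real (length w)"
      using w_def by simp
  qed
  define bad where "bad = (\<lambda>n. word_ball G A n - Q n)"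
  have badcard: "real (card (bad n)) \<le> r ^ n" for n
  proof -
    define m where "m = nat \<lfloor>lam * real n\<rfloor>"
    have "bad n \<subseteq> \<psi> ` {w. set w \<subseteq> S \<and> length w \<le> m}"
    proof
      fix g assume "g \<in> bad n"
      hence gc: "g \<in> carrier G" and wn: "word_length G A g \<le> n"
        and lt: "real (length (the_inv_into L \<psi> g)) < lam * real (word_length G A g)"
        unfolding bad_def Q_def word_ball_def by auto
      have "lam * real (word_length G A g) \<le> lam * real n" using wn lam0 by simp
      hence "real (length (the_inv_into L \<psi> g)) < lam * real n" using lt by linarith
      hence "length (the_inv_into L \<psi> g) \<le> m" unfolding m_def by linarith
      moreover have "the_inv_into L \<psi> g \<in> lists S" using invL[OF gc] assms(6) S_def by auto
      ultimately show "g \<in> \<psi> ` {w. set w \<subseteq> S \<and> length w \<le> m}"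
        using psiinv[OF gc] by (metis (mono_tags, lifting) image_eqI in_listsD mem_Collect_eq subsetI)
    qed
    hence "card (bad n) \<le> card (\<psi> ` {w. set w \<subseteq> S \<and> length w \<le> m})"
      using finite_lists_length_le[OF finS] by (intro card_mono) auto
    also have "\<dots> \<le> card {w. set w \<subseteq> S \<and> length w \<le> m}" by (rule card_image_le) (rule finite_lists_length_le[OF finS])
    also have "\<dots> = (\<Sum>i\<le>m. card S ^ i)" by (rule card_lists_length_le[OF finS])
    also have "\<dots> \<le> (card S + 1) ^ m" by (rule sum_pow_le)
    finally have "real (card (bad n)) \<le> real (card S + 1) ^ m" by (metis of_nat_le_iff of_nat_power)
    also have "\<dots> \<le> K ^ m" unfolding K_def by (intro power_mono) auto
    also have "\<dots> = K powr (real m)" using K2 by (simp add: powr_realpow)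
    also have "\<dots> \<le> K powr (lam * real n)"
    proof -
      have nn: "0 \<le> lam * real n" using lam0 by simp
      have "real m = real_of_int \<lfloor>lam * real n\<rfloor>" unfolding m_def using nn by simp
      also have "\<dots> \<le> lam * real n" by (rule of_int_floor_le)
      finally show ?thesis using K2 by (intro powr_mono) auto
    qed
    also have "\<dots> = r ^ n" unfolding r_def using K2
      by (simp add: powr_powr[symmetric] powr_realpow[symmetric] mult.commute)
    finally show ?thesis .
  qed
  have lim0: "(\<lambda>n. (r / c) ^ n) \<longlonglongrightarrow> 0"
    using r0 rc c1 by (intro LIMSEQ_power_zero) auto
  have lower: "(\<lambda>n. 1 - (r / c) ^ n) \<longlonglongrightarrow> 1"
    using tendsto_diff[OF tendsto_const lim0, of 1] by simp
  have evs: "\<forall>\<^sub>F n in sequentially. 1 - (r / c) ^ n \<le> real (card (Q n)) / real (card (word_ball G A n))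
      \<and> real (card (Q n)) / real (card (word_ball G A n)) \<le> 1"
    using ev
  proof eventually_elim
    case (elim n)
    define B where "B = word_ball G A n"
    have cpos: "c ^ n > 0" using c1 by simp
    hence Bpos: "real (card B) > 0" using elim unfolding B_def by linarith
    hence finB: "finite B" using card_ge_0_finite by force
    have QB: "Q n \<subseteq> B" unfolding Q_def B_def by auto
    have cardQ: "real (card (Q n)) = real (card B) - real (card (bad n))"
      unfolding bad_def B_def[symmetric]
      using QB finB by (simp add: card_Diff_subset of_nat_diff card_mono finite_subset Diff_Diff_Int Int_absorb2 card_Diff_subset_Int)
    have "real (card (bad n)) / real (card B) \<le> r ^ n / c ^ n"
      using badcard[of n] elim B_def Bpos cpos by (intro frac_le) auto
    hence b: "real (card (bad n)) / real (card B) \<le> (r / c) ^ n" by (simp add: power_divide)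
    have "real (card (Q n)) / real (card B) = 1 - real (card (bad n)) / real (card B)"
      using cardQ Bpos by (simp add: field_simps)
    then show ?case using b B_def by simp
  qed
  have "(\<lambda>n. real (card (Q n)) / real (card (word_ball G A n))) \<longlonglongrightarrow> 1"
    by (rule tendsto_sandwich[OF _ _ lower tendsto_const]) (use evs in \<open>auto elim: eventually_mono\<close>)
  then show ?thesis using part2 lam0 unfolding Q_def Let_def by blast
qed

end
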